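(* Fix $0<q<1$. Let $G\in\mathcal G$, $G\ne E$, let $X_1,X_2,\dots$ be i.i.d. with cdf $G$, and let $G_n$ be the empirical cdf of $X_1,\dots,X_n$. Then $\lim_{n\to\infty}T_q(G_n)=T_q(G)$ almost surely.
   Context: $E(t)=1-e^{-t}$, $\bar E=1-E$, $\bar G=1-G$. $\mathcal G=\{E\#F:F$ a probability distribution on $[1,\infty)\}$ with $(E\#F)(t)=\int E(t/\mu)\,dF(\mu)$. FDR functional $T_q(G)=\inf\{t:\bar G(t)\ge\frac1q\bar E(t)\}$ (with $\inf\emptyset=+\infty$). Empirical cdf: $G_n(t)=\frac1n\sum_{i=1}^n\mathbb 1\{X_i<t\}$. *)

theory Defs
  imports "HOL-Probability.Probability"
begin

definition Ecdf :: "real \<Rightarrow> real" where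
  "Ecdf t = (if t \<le> 0 then 0 else 1 - exp (- t))"

definition mix :: "real measure \<Rightarrow> real \<Rightarrow> real" where
  "mix F t = (\<integral>\<mu>. Ecdf (t / \<mu>) \<partial>F)"

definition Gcal :: "(real \<Rightarrow> real) set" where
  "Gcal = {G. \<exists>F. prob_space F \<and> sets F = sets borel \<and> measure F {1..} = 1 \<and> G = mix F}"

text \<open>FDR functional, with Inf of the empty set equal to +infinity (in ereal).\<close>
definition Tq :: "real \<Rightarrow> (real \<Rightarrow> real) \<Rightarrow> ereal" where
  "Tq q G = Inf {ereal t | t. 1 - G t \<ge> (1 / q) * (1 - Ecdf t)}"

text \<open>Empirical cdf of X_0, ..., X_(n-1) (the first n observations), with strict inequality.\<close>
definition emp_cdf :: "(nat \<Rightarrow> 'a \<Rightarrow> real) \<Rightarrow> nat \<Rightarrow> 'a \<Rightarrow> real \<Rightarrow> real" where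
  "emp_cdf X n \<omega> t = card {i \<in> {..<n}. X i \<omega> < t} / real n"

end

theory Submission
  imports Defs
begin



lemma sum_ind_card: "(\<Sum>i<(n::nat). if P i then 1 else (0::real)) = real (card {i\<in>{..<n}. P i})"
  by (simp add: sum.If_cases Int_def)

lemma slln_eps:
  fixes X :: "nat \<Rightarrow> 'a \<Rightarrow> real" and s p e :: real
  assumes M: "prob_space M" and meas: "\<And>i. X i \<in> borel_measurable M"
    and ind: "prob_space.indep_vars M (\<lambda>_. borel) X UNIV"
    and pr: "\<And>i. measure M {\<omega>\<in>space M. X i \<omega> \<le> s} = p"
    and e: "e > 0"
  shows "AE \<omega> in M. eventually (\<lambda>n. \<bar>real (card {i\<in>{..<n}. X i \<omega> \<le> s}) / real n - p\<bar> < e) sequentially"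
proof -
  interpret prob_space M by fact
  define Y where "Y i \<omega> = (if X i \<omega> \<le> s then 1 else (0::real))" for i \<omega>
  have mi: "(\<lambda>x::real. if x \<le> s then 1 else (0::real)) \<in> borel \<rightarrow>\<^sub>M borel"
  proof -
    have "(\<lambda>x::real. if x \<le> s then 1 else (0::real)) = indicator {..s}"
      by (auto simp: indicator_def fun_eq_iff)
    then show ?thesis by simp
  qed
  have indY: "indep_vars (\<lambda>_. borel) Y UNIV"
    unfolding Y_def
    by (rule indep_vars_compose2[OF ind, where Y="\<lambda>i x. if x \<le> s then 1 else (0::real)"]) (use mi in auto)
  have measY[measurable]: "Y i \<in> borel_measurable M" for i
    unfolding Y_def using meas[of i] by measurable
  have EY: "expectation (Y i) = p" for i
  proof -
    have "expectation (Y i) = expectation (indicator {\<omega>\<in>space M. X i \<omega> \<le> s})"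
      by (rule Bochner_Integration.integral_cong) (auto simp: Y_def indicator_def)
    also have "\<dots> = p" using pr[of i] by (simp add: integral_indicator Int_absorb2)
    finally show ?thesis .
  qed
  define A where "A n = {\<omega>\<in>space M. \<bar>(\<Sum>i\<in>{..<Suc n}. Y i \<omega>) - real (Suc n) * p\<bar> \<ge> real (Suc n) * e}" for n
  define c where "c = exp (- 2 * e\<^sup>2)"
  have c: "0 < c" "c < 1" using e by (auto simp: c_def)
  have PA: "measure M (A n) \<le> 2 * c ^ n" for n
  proof -
    interpret H: Hoeffding_ineq M "{..<Suc n}" Y "\<lambda>_. 0" "\<lambda>_. 1" "\<Sum>i<Suc n. expectation (Y i)"
    proof unfold_locales
      show "indep_vars (\<lambda>_. borel) Y {..<Suc n}"
        by (rule indep_vars_subset[OF indY]) auto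
      fix i show "AE x in M. Y i x \<in> {0..1}" by (auto simp: Y_def)
    qed auto
    have "measure M (A n) \<le> 2 * exp (-2 * (real (Suc n) * e)\<^sup>2 / (\<Sum>i\<in>{..<Suc n}. (1 - 0)\<^sup>2))"
      using H.Hoeffding_ineq_abs_ge[of "real (Suc n) * e"] e
      by (simp add: A_def EY)
    also have "(-2 * (real (Suc n) * e)\<^sup>2 / (\<Sum>i\<in>{..<Suc n}. (1 - 0)\<^sup>2)) = real (Suc n) * (-2 * e\<^sup>2)"
      by (simp add: power2_eq_square)
    also have "exp \<dots> = c ^ Suc n" unfolding c_def by (rule exp_of_nat_mult)
    also have "c ^ Suc n \<le> c ^ n" using c by (simp add: mult_left_le_one_le)
    finally show ?thesis by simp
  qed
  have sA: "summable (\<lambda>n. measure M (A n))"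
    by (rule summable_comparison_test[where g="\<lambda>n. 2 * c ^ n"])
       (use PA c in \<open>auto intro!: summable_mult summable_geometric\<close>)
  have Am[measurable]: "A n \<in> sets M" for n unfolding A_def by measurable
  have "AE \<omega> in M. eventually (\<lambda>n. \<omega> \<in> space M - A n) sequentially"
    by (rule borel_cantelli_AE1) (auto simp: sA emeasure_eq_measure)
  then show ?thesis
  proof (rule eventually_mono)
    fix \<omega> assume "eventually (\<lambda>n. \<omega> \<in> space M - A n) sequentially"
    then have "eventually (\<lambda>n. \<bar>real (card {i\<in>{..<Suc n}. X i \<omega> \<le> s}) / real (Suc n) - p\<bar> < e) sequentially"
    proof (rule eventually_mono)
      fix n assume n: "\<omega> \<in> space M - A n"
      define C where "C = real (card {i\<in>{..<Suc n}. X i \<omega> \<le> s})"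
      have sY: "(\<Sum>i\<in>{..<Suc n}. Y i \<omega>) = C"
        unfolding Y_def C_def by (rule sum_ind_card)
      have "\<not> (\<bar>C - real (Suc n) * p\<bar> \<ge> real (Suc n) * e)"
        proof -
        have "\<not> (\<bar>(\<Sum>i\<in>{..<Suc n}. Y i \<omega>) - real (Suc n) * p\<bar> \<ge> real (Suc n) * e)"
          using n unfolding A_def by simp
        then show ?thesis unfolding sY .
      qed
      then have lt: "\<bar>C - real (Suc n) * p\<bar> < real (Suc n) * e" by linarith
      have "C / real (Suc n) - p = (C - real (Suc n) * p) / real (Suc n)"
        by (simp add: field_simps)
      also have "\<bar>\<dots>\<bar> = \<bar>C - real (Suc n) * p\<bar> / real (Suc n)"
        by (simp add: abs_divide)
      also have "\<dots> < e" using lt by (subst pos_divide_less_eq) (simp_all add: mult.commute)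
      finally show "\<bar>real (card {i\<in>{..<Suc n}. X i \<omega> \<le> s}) / real (Suc n) - p\<bar> < e"
        unfolding C_def .
    qed
    then show "eventually (\<lambda>n. \<bar>real (card {i\<in>{..<n}. X i \<omega> \<le> s}) / real n - p\<bar> < e) sequentially"
      by (subst eventually_sequentially_Suc[symmetric])
  qed
qed




lemma Ecdf_nonneg_part: "t \<ge> 0 \<Longrightarrow> 1 - Ecdf t = exp (- t)"
  by (auto simp: Ecdf_def)

lemma Ecdf_nonpos_part: "t \<le> 0 \<Longrightarrow> 1 - Ecdf t = 1"
  by (auto simp: Ecdf_def)

lemma Tq_le: "1 / q * (1 - Ecdf u) \<le> 1 - g u \<Longrightarrow> Tq q g \<le> ereal u"
  unfolding Tq_def by (rule Inf_lower) auto

lemma Tq_ge: "(\<And>t. 1 / q * (1 - Ecdf t) \<le> 1 - g t \<Longrightarrow> a \<le> t) \<Longrightarrow> ereal a \<le> Tq q g"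
  unfolding Tq_def by (rule Inf_greatest) auto

lemma Tq_less: "Tq q g < ereal b \<Longrightarrow> \<exists>u. 1 / q * (1 - Ecdf u) \<le> 1 - g u \<and> u < b"
  unfolding Tq_def by (auto simp: Inf_less_iff)

lemma grid_point:
  assumes "0 \<le> s" "s < b"
  shows "\<exists>j m. s < real j / real (Suc m) \<and> real j / real (Suc m) < b"
proof -
  have "0 < b - s" using assms by simp
  then obtain m where m: "inverse (real (Suc m)) < b - s" using reals_Archimedean by blast
  define j where "j = nat \<lfloor>s * real (Suc m)\<rfloor> + 1"
  have f: "0 \<le> \<lfloor>s * real (Suc m)\<rfloor>" using assms by simp
  have rj: "real j = real_of_int \<lfloor>s * real (Suc m)\<rfloor> + 1" using f unfolding j_def by simp
  have j1: "s * real (Suc m) < real j" using rj by linarith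
  have j2: "real j \<le> s * real (Suc m) + 1" using rj by linarith
  have "s < real j / real (Suc m)" using j1 by (simp add: field_simps)
  moreover have "real j / real (Suc m) \<le> s + inverse (real (Suc m))"
  proof -
    have "real j / real (Suc m) \<le> (s * real (Suc m) + 1) / real (Suc m)"
      using j2 by (simp add: divide_right_mono)
    also have "\<dots> = s + inverse (real (Suc m))" by (simp add: field_simps)
    finally show ?thesis .
  qed
  ultimately show ?thesis using m by force
qed

lemma grid_cover:
  assumes "0 < t"
  shows "\<exists>j::nat. real j / real (Suc m) < t \<and> t \<le> (real j + 1) / real (Suc m)"
proof -
  define j where "j = nat \<lceil>t * real (Suc m)\<rceil> - 1"
  have c: "\<lceil>t * real (Suc m)\<rceil> \<ge> 1" using assms by (simp add: zero_less_mult_iff)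
  have "real j = real_of_int \<lceil>t * real (Suc m)\<rceil> - 1" using c unfolding j_def by (simp add: of_nat_diff) linarith
  then have "real j < t * real (Suc m)" "t * real (Suc m) \<le> real j + 1" by linarith+
  then show ?thesis by (intro exI[of _ j]) (simp add: field_simps)
qed

lemma exp_small:
  assumes "\<rho> * q < 1" "0 < q"
  shows "\<exists>m. exp (1 / real (Suc m)) * \<rho> < 1 / q"
proof (cases "\<rho> \<le> 0")
  case True then show ?thesis using assms
    by (intro exI[of _ 0]) (smt (verit) divide_pos_pos exp_gt_zero mult_nonneg_nonpos)
next
  case False
  then have "0 < 1 - \<rho> * q" using assms by simp
  then obtain m where m: "inverse (real (Suc m)) < 1 - \<rho> * q" using reals_Archimedean by blast
  define d where "d = 1 / real (Suc m)"
  have d: "0 < d" "d < 1 - \<rho> * q" using m by (auto simp: d_def inverse_eq_divide)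
  have "1 - d \<le> exp (- d)" using exp_ge_add_one_self[of "-d"] by simp
  then have "exp d * (1 - d) \<le> 1" by (simp add: exp_minus field_simps)
  moreover have "\<rho> * q < 1 - d" using d by simp
  ultimately have "exp d * (\<rho> * q) < 1"
    by (smt (verit) False assms(2) exp_gt_zero mult_less_cancel_left_pos zero_less_mult_iff)
  then have "exp d * \<rho> < 1 / q" using assms by (simp add: field_simps)
  then show ?thesis by (auto simp: d_def)
qed




lemma det_conv:
  fixes Gn Hn :: "nat \<Rightarrow> real \<Rightarrow> real" and G r :: "real \<Rightarrow> real" and q :: real
  assumes q: "0 < q" "q < 1"
  and Gn0: "\<And>n t. 0 \<le> Gn n t"
  and GH: "\<And>n t. Gn n t \<le> Hn n t"
  and HG: "\<And>n s t. s < t \<Longrightarrow> Hn n s \<le> Gn n t"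
  and G0: "\<And>t. 0 \<le> G t"
  and Gr: "\<And>t. t \<ge> 0 \<Longrightarrow> 1 - G t = exp (- t) * r t"
  and rmono: "\<And>s t. 0 \<le> s \<Longrightarrow> s < t \<Longrightarrow> r s < r t"
  and rbig: "\<exists>t0\<ge>0. r t0 \<ge> 1 / q"
  and conv: "\<And>j m. (\<lambda>n. Hn n (real j / real (Suc m))) \<longlonglongrightarrow> G (real j / real (Suc m))"
  shows "(\<lambda>n. Tq q (Gn n)) \<longlonglongrightarrow> Tq q G"
proof -
  have iq: "1 < 1 / q" using q by (simp add: field_simps)
  have memS: "1 / q * (1 - Ecdf t) \<le> 1 - G t \<longleftrightarrow> (0 \<le> t \<and> 1 / q \<le> r t)" for t
  proof (cases "t \<le> 0")
    case True
    have "\<not> 1 / q * (1 - Ecdf t) \<le> 1 - G t" using True G0[of t] iq by (simp add: Ecdf_nonpos_part)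
    moreover have "\<not> (0 \<le> t \<and> 1 / q \<le> r t)"
    proof
      assume "0 \<le> t \<and> 1 / q \<le> r t"
      then have "t = 0" "1/q \<le> r 0" using True by auto
      then show False using Gr[of 0] G0[of 0] iq by simp
    qed
    ultimately show ?thesis by blast
  next
    case False
    then have "1 / q * (1 - Ecdf t) = exp (- t) * (1 / q)" "1 - G t = exp (- t) * r t"
      using Gr[of t] by (auto simp: Ecdf_nonneg_part)
    then show ?thesis using False by (simp only: mult_le_cancel_left_pos[OF exp_gt_zero]) simp
  qed
  have memSn: "0 < t" if "1 / q * (1 - Ecdf t) \<le> 1 - Gn n t" for n t
  proof (rule ccontr)
    assume "\<not> 0 < t"
    then show False using that Gn0[of n t] iq by (simp add: Ecdf_nonpos_part)
  qed
  obtain t0 where t0: "t0 \<ge> 0" "r t0 \<ge> 1 / q" using rbig by blast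
  have T1: "Tq q G \<le> ereal t0" by (rule Tq_le) (use t0 memS in auto)
  have T0: "ereal 0 \<le> Tq q G" by (rule Tq_ge) (use memS in auto)
  define ts where "ts = real_of_ereal (Tq q G)"
  have Tts: "Tq q G = ereal ts" using T0 T1 unfolding ts_def by (cases "Tq q G") auto
  have ts0: "0 \<le> ts" using T0 Tts by simp
  have lowS: "ts \<le> t" if "0 \<le> t" "1 / q \<le> r t" for t
  proof -
    have "Tq q G \<le> ereal t" by (rule Tq_le) (use that memS in auto)
    then show ?thesis using Tts by simp
  qed
  have apprS: "\<exists>s. 0 \<le> s \<and> 1 / q \<le> r s \<and> s < ts + e" if "e > 0" for e
  proof -
    have "Tq q G < ereal (ts + e)" using Tts that by simp
    then show ?thesis using Tq_less memS by blast
  qed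
  have UP: "eventually (\<lambda>n. Tq q (Gn n) \<le> ereal (ts + e)) sequentially" if e: "e > 0" for e
  proof -
    obtain s where s: "0 \<le> s" "1 / q \<le> r s" "s < ts + e" using apprS[OF e] by blast
    obtain j m where u: "s < real j / real (Suc m)" "real j / real (Suc m) < ts + e"
      using grid_point[OF s(1) s(3)] by blast
    define u where "u = real j / real (Suc m)"
    have u0: "0 \<le> u" "s < u" "u < ts + e" using u s unfolding u_def by auto
    have "r s < r u" using rmono s u0 by auto
    then have ru: "1 / q < r u" using s by simp
    define d where "d = (1 - G u) - exp (- u) / q"
    have "exp (- u) * (1 / q) < exp (- u) * r u" using ru by (simp only: mult_less_cancel_left_pos[OF exp_gt_zero])
    then have "exp (- u) / q < exp (- u) * r u" by simp
    then have d: "d > 0" unfolding d_def using Gr[OF u0(1)] by simp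
    have "eventually (\<lambda>n. dist (Hn n u) (G u) < d) sequentially"
      using conv[of j m] d unfolding u_def tendsto_iff by blast
    then show ?thesis
    proof (rule eventually_mono)
      fix n assume "dist (Hn n u) (G u) < d"
      then have "Hn n u < G u + d" by (simp add: dist_real_def)
      then have "1 / q * (1 - Ecdf u) \<le> 1 - Gn n u"
        using GH[of n u] u0 unfolding d_def by (simp add: Ecdf_nonneg_part)
      then have "Tq q (Gn n) \<le> ereal u" by (rule Tq_le)
      also have "\<dots> \<le> ereal (ts + e)" using u0 by simp
      finally show "Tq q (Gn n) \<le> ereal (ts + e)" .
    qed
  qed
  have LOW: "eventually (\<lambda>n. ereal (ts - e) \<le> Tq q (Gn n)) sequentially" if e: "e > 0" for e
  proof (cases "ts - e \<le> 0")
    case True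
    show ?thesis
      by (rule always_eventually, rule allI, rule Tq_ge) (use memSn True in force)
  next
    case False
    define a where "a = ts - e"
    have a0: "0 < a" using False a_def by simp
    have "\<not> 1 / q \<le> r a" using lowS[of a] a0 e unfolding a_def by auto
    then have ra: "r a * q < 1" using q by (simp add: field_simps)
    obtain m where m: "exp (1 / real (Suc m)) * r a < 1 / q" using exp_small[OF ra q(1)] by blast
    define d where "d = 1 / real (Suc m)"
    have d0: "0 < d" by (simp add: d_def)
    define J where "J = {j::nat. real j * d < a}"
    have finJ: "finite J"
    proof -
      have "J \<subseteq> {..nat \<lceil>a / d\<rceil>}"
      proof
        fix j assume "j \<in> J"
        then have "real j < a / d" using d0 by (simp add: J_def field_simps)
        then show "j \<in> {..nat \<lceil>a / d\<rceil>}" by simp linarith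
      qed
      then show ?thesis using finite_subset by blast
    qed
    have ev: "eventually (\<lambda>n. 1 - Hn n (real j * d) < exp (- (real j * d + d)) / q) sequentially"
      if j: "j \<in> J" for j
    proof -
      define x where "x = real j * d"
      have x0: "0 \<le> x" "x < a" using j d0 by (auto simp: x_def J_def)
      have rx: "r x \<le> r a" using rmono[of x a] x0 by (cases "x = a") auto
      have "1 - G x = exp (- x) * r x" using Gr x0 by simp
      also have "\<dots> \<le> exp (- x) * r a" using rx by simp
      also have "\<dots> < exp (- x) * (exp (- d) / q)"
      proof -
        have "exp d * r a < 1 / q" using m by (simp add: d_def)
        then have "exp (- d) * (exp d * r a) < exp (- d) * (1 / q)"
          by (simp only: mult_less_cancel_left_pos[OF exp_gt_zero])
        moreover have "exp (- d) * (exp d * r a) = r a"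
          by (simp add: mult.assoc[symmetric] exp_add[symmetric])
        ultimately have "r a < exp (- d) / q" by simp
        then show ?thesis by (simp only: mult_less_cancel_left_pos[OF exp_gt_zero])
      qed
      also have "\<dots> = exp (- x + - d) / q" by (simp only: exp_add) simp
      also have "\<dots> = exp (- (x + d)) / q" by simp
      finally have gap: "0 < exp (- (x + d)) / q - (1 - G x)" by simp
      have "(\<lambda>n. Hn n x) \<longlonglongrightarrow> G x" using conv[of j m] by (simp add: x_def d_def)
      then have "eventually (\<lambda>n. dist (Hn n x) (G x) < exp (- (x + d)) / q - (1 - G x)) sequentially"
        using gap unfolding tendsto_iff by blast
      then show ?thesis
        by (rule eventually_mono) (simp add: x_def dist_real_def abs_less_iff)
    qed
    have "eventually (\<lambda>n. \<forall>j\<in>J. 1 - Hn n (real j * d) < exp (- (real j * d + d)) / q) sequentially"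
      using finJ ev by (simp add: eventually_ball_finite)
    then show ?thesis
    proof (rule eventually_mono)
      fix n assume H: "\<forall>j\<in>J. 1 - Hn n (real j * d) < exp (- (real j * d + d)) / q"
      show "ereal (ts - e) \<le> Tq q (Gn n)"
      proof (rule Tq_ge)
        fix t assume tS: "1 / q * (1 - Ecdf t) \<le> 1 - Gn n t"
        have t0: "0 < t" using memSn[OF tS] .
        show "ts - e \<le> t"
        proof (rule ccontr)
          assume "\<not> ts - e \<le> t"
          then have ta: "t < a" unfolding a_def by simp
          obtain j :: nat where j: "real j / real (Suc m) < t" "t \<le> (real j + 1) / real (Suc m)"
            using grid_cover[OF t0] by blast
          have jd: "real j * d < t" "t \<le> real j * d + d" using j by (auto simp: d_def field_simps)
          have jJ: "j \<in> J" using jd ta by (simp add: J_def)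
          have "1 - Gn n t \<le> 1 - Hn n (real j * d)" using HG[OF jd(1), of n] by simp
          also have "\<dots> < exp (- (real j * d + d)) / q" using H jJ by blast
          also have "\<dots> \<le> exp (- t) / q" using jd q by (simp add: divide_right_mono)
          also have "\<dots> = 1 / q * (1 - Ecdf t)" using t0 by (simp add: Ecdf_nonneg_part)
          finally show False using tS by simp
        qed
      qed
    qed
  qed
  show ?thesis unfolding Tts
  proof (rule order_tendstoI)
    fix y assume y: "y < ereal ts"
    obtain e where e: "e > 0" "y < ereal (ts - e)"
    proof (cases y)
      case (real b)
      then show ?thesis using y by (intro that[of "(ts - b) / 2"]) (auto simp: field_simps)
    next
      case PInf then show ?thesis using y by simp
    next
      case MInf then show ?thesis by (intro that[of 1]) auto
    qed
    show "eventually (\<lambda>n. y < Tq q (Gn n)) sequentially"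
      using LOW[OF e(1)] by (rule eventually_mono) (use e in auto)
  next
    fix y assume y: "ereal ts < y"
    obtain e where e: "e > 0" "ereal (ts + e) < y"
    proof (cases y)
      case (real b)
      then show ?thesis using y by (intro that[of "(b - ts) / 2"]) (auto simp: field_simps)
    next
      case PInf then show ?thesis by (intro that[of 1]) auto
    next
      case MInf then show ?thesis using y by simp
    qed
    show "eventually (\<lambda>n. Tq q (Gn n) < y) sequentially"
      using UP[OF e(1)] by (rule eventually_mono) (use e in auto)
  qed
qed




context
  fixes F :: "real measure"
  assumes PF: "prob_space F" and sF: "sets F = sets borel" and m1: "measure F {1..} = 1"
begin

interpretation F: prob_space F by (rule PF)

lemma mF: "f \<in> borel_measurable F \<longleftrightarrow> f \<in> borel_measurable borel"
  by (subst measurable_cong_sets[OF sF refl]) (rule refl)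

lemma AE1: "AE \<mu> in F. 1 \<le> \<mu>"
  using F.AE_prob_1[OF m1] by simp

lemma Ecdf_meas: "(\<lambda>x::real. Ecdf x) \<in> borel_measurable borel"
  unfolding Ecdf_def by measurable

lemma Ecdf_nonneg: "0 \<le> Ecdf x"
  by (auto simp: Ecdf_def)

lemma Ecdf_le1: "Ecdf x \<le> 1"
  by (auto simp: Ecdf_def)

lemma int_exp: "integrable F (\<lambda>\<mu>. exp (a + b / \<mu>))"
proof (rule F.integrable_const_bound[where B="exp (\<bar>a\<bar> + \<bar>b\<bar>)"])
  show "AE \<mu> in F. norm (exp (a + b / \<mu>)) \<le> exp (\<bar>a\<bar> + \<bar>b\<bar>)"
    using AE1
  proof (rule eventually_mono)
    fix \<mu> :: real assume \<mu>: "1 \<le> \<mu>"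
    have "\<bar>b / \<mu>\<bar> = \<bar>b\<bar> / \<mu>" using \<mu> by (simp add: abs_divide)
    also have "\<dots> \<le> \<bar>b\<bar> / 1" using \<mu> by (intro divide_left_mono) auto
    finally have "\<bar>b / \<mu>\<bar> \<le> \<bar>b\<bar>" by simp
    then have "a + b / \<mu> \<le> \<bar>a\<bar> + \<bar>b\<bar>" by linarith
    then show "norm (exp (a + b / \<mu>)) \<le> exp (\<bar>a\<bar> + \<bar>b\<bar>)" by simp
  qed
  show "(\<lambda>\<mu>. exp (a + b / \<mu>)) \<in> borel_measurable F" unfolding mF by measurable
qed

lemma int_Ecdf: "integrable F (\<lambda>\<mu>. Ecdf (t / \<mu>))"
proof (rule F.integrable_const_bound[where B=1])
  show "AE \<mu> in F. norm (Ecdf (t / \<mu>)) \<le> 1" using Ecdf_nonneg Ecdf_le1 by simp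
  show "(\<lambda>\<mu>. Ecdf (t / \<mu>)) \<in> borel_measurable F" unfolding mF Ecdf_def by measurable
qed

lemma int_exp': "integrable F (\<lambda>\<mu>. exp (a - b / \<mu>))"
  using int_exp[of a "- b"] by simp

definition rF :: "real \<Rightarrow> real" where "rF t = (\<integral>\<mu>. exp (t + (- t) / \<mu>) \<partial>F)"

lemma mix_nonneg: "0 \<le> mix F t"
  unfolding mix_def by (simp add: Ecdf_nonneg Bochner_Integration.integral_nonneg)

lemma mix_r: assumes t: "0 \<le> t" shows "1 - mix F t = exp (- t) * rF t"
proof -
  have "mix F t = (\<integral>\<mu>. 1 - exp ((- t) / \<mu>) \<partial>F)"
    unfolding mix_def
  proof (rule integral_cong_AE)
    show "(\<lambda>\<mu>. Ecdf (t / \<mu>)) \<in> borel_measurable F" unfolding mF Ecdf_def by measurable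
    show "(\<lambda>\<mu>. 1 - exp ((- t) / \<mu>)) \<in> borel_measurable F" unfolding mF by measurable
    show "AE \<mu> in F. Ecdf (t / \<mu>) = 1 - exp ((- t) / \<mu>)"
      using AE1 by (rule eventually_mono) (use t in \<open>auto simp: Ecdf_def divide_le_0_iff\<close>)
  qed
  also have "\<dots> = 1 - (\<integral>\<mu>. exp ((- t) / \<mu>) \<partial>F)"
  proof -
    have ie: "integrable F (\<lambda>\<mu>. exp ((- t) / \<mu>))" using int_exp[of 0 "- t"] by simp
    have ie': "integrable F (\<lambda>\<mu>. exp (- (t / \<mu>)))" using ie by simp
    show ?thesis by (subst Bochner_Integration.integral_diff) (auto simp: ie ie' F.prob_space)
  qed
  finally have "1 - mix F t = (\<integral>\<mu>. exp ((- t) / \<mu>) \<partial>F)" by simp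
  also have "\<dots> = (\<integral>\<mu>. exp (- t) * exp (t + (- t) / \<mu>) \<partial>F)"
    by (simp add: exp_add[symmetric])
  also have "\<dots> = exp (- t) * rF t" unfolding rF_def by (rule integral_mult_right_zero)
  finally show ?thesis .
qed

lemma not_point: assumes "mix F \<noteq> Ecdf" shows "\<not> (AE \<mu> in F. \<mu> \<le> 1)"
proof
  assume "AE \<mu> in F. \<mu> \<le> 1"
  with AE1 have A: "AE \<mu> in F. \<mu> = 1" by eventually_elim auto
  have "mix F t = Ecdf t" for t
  proof -
    have "mix F t = (\<integral>\<mu>. Ecdf t \<partial>F)" unfolding mix_def
      by (rule integral_cong_AE) (use A in \<open>auto simp: mF Ecdf_def\<close>)
    then show ?thesis by (simp add: F.prob_space)
  qed
  then show False using assms by auto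
qed

lemma rF_mono:
  assumes np: "mix F \<noteq> Ecdf" and s: "0 \<le> s" and st: "s < t"
  shows "rF s < rF t"
proof -
  define f where "f \<mu> = exp (t + (- t) / \<mu>) - exp (s + (- s) / \<mu>)" for \<mu>
  have intf: "integrable F f" unfolding f_def by (intro Bochner_Integration.integrable_diff int_exp)
  have key: "0 < f \<mu>" if "1 < \<mu>" for \<mu>
  proof -
    have "s * (1 - 1 / \<mu>) < t * (1 - 1 / \<mu>)" using that st by (intro mult_strict_right_mono) auto
    then have "s + (- s) / \<mu> < t + (- t) / \<mu>" by (simp add: algebra_simps)
    then show ?thesis unfolding f_def by simp
  qed
  have nn: "0 \<le> f \<mu>" if "1 \<le> \<mu>" for \<mu>
  proof (cases "\<mu> = 1")
    case True then show ?thesis by (simp add: f_def)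
  next
    case False then show ?thesis using key[of \<mu>] that by simp
  qed
  have AEnn: "AE \<mu> in F. 0 \<le> f \<mu>" using AE1 by (rule eventually_mono) (rule nn)
  have diff: "rF t - rF s = integral\<^sup>L F f"
    unfolding rF_def f_def by (subst Bochner_Integration.integral_diff) (auto intro: int_exp int_exp')
  have ge: "0 \<le> integral\<^sup>L F f" by (rule integral_nonneg_AE[OF AEnn])
  have "integral\<^sup>L F f \<noteq> 0"
  proof
    assume "integral\<^sup>L F f = 0"
    then have "AE \<mu> in F. f \<mu> = 0" using integral_nonneg_eq_0_iff_AE[OF intf AEnn] by simp
    then have "AE \<mu> in F. \<mu> \<le> 1"
    proof (rule eventually_mono)
      fix \<mu> assume "f \<mu> = 0"
      then show "\<mu> \<le> 1" using key[of \<mu>] by (cases "1 < \<mu>") auto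
    qed
    then show False using not_point[OF np] by simp
  qed
  then show ?thesis using diff ge by simp
qed

lemma rF_big:
  assumes np: "mix F \<noteq> Ecdf" and q: "0 < q"
  shows "\<exists>t0\<ge>0. 1 / q \<le> rF t0"
proof -
  have "\<exists>k::nat. \<not> (AE \<mu> in F. \<mu> < 1 + 1 / real (Suc k))"
  proof (rule ccontr)
    assume "\<not> ?thesis"
    then have "\<forall>k::nat. AE \<mu> in F. \<mu> < 1 + 1 / real (Suc k)" by blast
    then have "AE \<mu> in F. \<forall>k::nat. \<mu> < 1 + 1 / real (Suc k)" by (simp add: AE_all_countable)
    then have "AE \<mu> in F. \<mu> \<le> 1"
    proof (rule eventually_mono)
      fix \<mu> :: real assume H: "\<forall>k::nat. \<mu> < 1 + 1 / real (Suc k)"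
      show "\<mu> \<le> 1"
      proof (rule ccontr)
        assume "\<not> \<mu> \<le> 1"
        then have "0 < \<mu> - 1" by simp
        then obtain k where "inverse (real (Suc k)) < \<mu> - 1" using reals_Archimedean by blast
        then show False using H[rule_format, of k] by (simp add: inverse_eq_divide)
      qed
    qed
    then show False using not_point[OF np] by simp
  qed
  then obtain k :: nat where k: "\<not> (AE \<mu> in F. \<mu> < 1 + 1 / real (Suc k))" by blast
  define c where "c = 1 + 1 / real (Suc k)"
  have c1: "1 < c" by (simp add: c_def)
  define A where "A = {\<mu> \<in> space F. c \<le> \<mu>}"
  have Am: "A \<in> sets F"
  proof -
    have "{c..} \<in> sets F" using sF by simp
    moreover have "A = {c..} \<inter> space F" by (auto simp: A_def)
    ultimately show ?thesis by (simp add: sets.Int)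
  qed
  define p where "p = measure F A"
  have p0: "0 < p"
  proof (rule ccontr)
    assume "\<not> 0 < p"
    then have "p = 0" using measure_nonneg[of F A] unfolding p_def by linarith
    then have "measure F (space F - A) = 1" using F.prob_compl[OF Am] unfolding p_def by simp
    then have "AE \<mu> in F. \<mu> \<in> space F - A" by (rule F.AE_prob_1)
    then have "AE \<mu> in F. \<mu> < c" by (rule eventually_mono) (auto simp: A_def)
    then show False using k unfolding c_def by simp
  qed
  define a where "a = 1 - 1 / c"
  have a0: "0 < a" using c1 by (simp add: a_def)
  have lower: "p * exp (t * a) \<le> rF t" if t: "0 \<le> t" for t
  proof -
    have "p * exp (t * a) = (\<integral>\<mu>. indicator A \<mu> * exp (t * a) \<partial>F)"
      unfolding p_def by (simp add: integral_mult_left_zero integral_indicator Int_absorb2 sets.sets_into_space[OF Am])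
    also have "\<dots> \<le> rF t"
      unfolding rF_def
    proof (rule integral_mono_AE)
      show "integrable F (\<lambda>\<mu>. indicator A \<mu> * exp (t * a))"
        using Am by (intro integrable_mult_left) (simp add: F.integrable_const_bound[where B=1])
      show "integrable F (\<lambda>\<mu>. exp (t + - t / \<mu>))" by (rule int_exp)
      show "AE \<mu> in F. indicator A \<mu> * exp (t * a) \<le> exp (t + - t / \<mu>)"
        using AE1
      proof (rule eventually_mono)
        fix \<mu> :: real assume mu: "1 \<le> \<mu>"
        show "indicator A \<mu> * exp (t * a) \<le> exp (t + - t / \<mu>)"
        proof (cases "\<mu> \<in> A")
          case True
          then have "c \<le> \<mu>" by (simp add: A_def)
          then have "1 / \<mu> \<le> 1 / c" using c1 by (intro divide_left_mono) auto
          then have "t * (1 / \<mu>) \<le> t * (1 / c)" using t by (intro mult_left_mono)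
          then have "t * a \<le> t + - t / \<mu>" by (simp add: a_def algebra_simps)
          then show ?thesis using True by simp
        next
          case False then show ?thesis by simp
        qed
      qed
    qed
    finally show ?thesis .
  qed
  define t0 where "t0 = 1 / (q * p * a)"
  have t00: "0 \<le> t0" using q p0 a0 by (simp add: t0_def)
  have "1 / q = p * (t0 * a)" using q p0 a0 by (simp add: t0_def field_simps)
  also have "\<dots> \<le> p * exp (t0 * a)"
  proof -
    have "t0 * a \<le> exp (t0 * a)" using exp_ge_add_one_self[of "t0 * a"] by linarith
    then show ?thesis using p0 by (intro mult_left_mono) auto
  qed
  also have "\<dots> \<le> rF t0" by (rule lower[OF t00])
  finally show ?thesis using t00 by blast
qed

end




lemma slln:
  fixes X :: "nat \<Rightarrow> 'a \<Rightarrow> real" and s p :: real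
  assumes M: "prob_space M" and meas: "\<And>i. X i \<in> borel_measurable M"
    and ind: "prob_space.indep_vars M (\<lambda>_. borel) X UNIV"
    and pr: "\<And>i. measure M {\<omega>\<in>space M. X i \<omega> \<le> s} = p"
  shows "AE \<omega> in M. (\<lambda>n. real (card {i\<in>{..<n}. X i \<omega> \<le> s}) / real n) \<longlonglongrightarrow> p"
proof -
  have "AE \<omega> in M. \<forall>k::nat. eventually (\<lambda>n. \<bar>real (card {i\<in>{..<n}. X i \<omega> \<le> s}) / real n - p\<bar> < 1 / real (Suc k)) sequentially"
    unfolding AE_all_countable by (intro allI slln_eps[OF M meas ind pr]) simp
  then show ?thesis
  proof (rule eventually_mono)
    fix \<omega> assume H: "\<forall>k::nat. eventually (\<lambda>n. \<bar>real (card {i\<in>{..<n}. X i \<omega> \<le> s}) / real n - p\<bar> < 1 / real (Suc k)) sequentially"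
    show "(\<lambda>n. real (card {i\<in>{..<n}. X i \<omega> \<le> s}) / real n) \<longlonglongrightarrow> p"
      unfolding tendsto_iff dist_real_def
    proof (intro allI impI)
      fix r :: real assume "0 < r"
      then obtain k where k: "inverse (real (Suc k)) < r" using reals_Archimedean by blast
      from H[rule_format, of k] show "eventually (\<lambda>n. \<bar>real (card {i\<in>{..<n}. X i \<omega> \<le> s}) / real n - p\<bar> < r) sequentially"
        by (rule eventually_mono) (use k in \<open>auto simp: inverse_eq_divide\<close>)
    qed
  qed
qed

theorem corollary4p1:
  fixes M :: "'a measure" and X :: "nat \<Rightarrow> 'a \<Rightarrow> real" and G :: "real \<Rightarrow> real" and q :: real
  assumes "prob_space M"
    and "0 < q" "q < 1"
    and "G \<in> Gcal" "G \<noteq> Ecdf"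
    and "\<And>i. X i \<in> borel_measurable M"
    and "prob_space.indep_vars M (\<lambda>_. borel) X UNIV"
    and "\<And>i. cdf (distr M borel (X i)) = G"
  shows "AE \<omega> in M. (\<lambda>n. Tq q (emp_cdf X n \<omega>)) \<longlonglongrightarrow> Tq q G"
proof -
  interpret prob_space M by fact
  obtain F where F: "prob_space F" "sets F = sets borel" "measure F {1..} = 1" "G = mix F"
    using assms(4) unfolding Gcal_def by blast
  have np: "mix F \<noteq> Ecdf" using assms(5) F(4) by simp
  have pr: "measure M {\<omega>\<in>space M. X i \<omega> \<le> s} = G s" for i s
  proof -
    have "G s = cdf (distr M borel (X i)) s" using assms(8) by simp
    also have "\<dots> = measure (distr M borel (X i)) {..s}" by (simp add: cdf_def)
    also have "\<dots> = measure M (X i -` {..s} \<inter> space M)" by (rule measure_distr) (auto simp: assms(6))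
    also have "X i -` {..s} \<inter> space M = {\<omega>\<in>space M. X i \<omega> \<le> s}" by auto
    finally show ?thesis by simp
  qed
  have "AE \<omega> in M. \<forall>j m. (\<lambda>n. real (card {i\<in>{..<n}. X i \<omega> \<le> real j / real (Suc m)}) / real n) \<longlonglongrightarrow> G (real j / real (Suc m))"
    unfolding AE_all_countable by (intro allI slln[OF assms(1) assms(6) assms(7) pr])
  then show ?thesis
  proof (rule eventually_mono)
    fix \<omega> assume H: "\<forall>j m. (\<lambda>n. real (card {i\<in>{..<n}. X i \<omega> \<le> real j / real (Suc m)}) / real n) \<longlonglongrightarrow> G (real j / real (Suc m))"
    show "(\<lambda>n. Tq q (emp_cdf X n \<omega>)) \<longlonglongrightarrow> Tq q G"
    proof (rule det_conv[where Hn = "\<lambda>n s. real (card {i\<in>{..<n}. X i \<omega> \<le> s}) / real n" and r = "rF F"])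
      show "0 < q" "q < 1" by (fact assms(2), fact assms(3))
      show "0 \<le> emp_cdf X n \<omega> t" for n t by (simp add: emp_cdf_def)
      show "emp_cdf X n \<omega> t \<le> real (card {i\<in>{..<n}. X i \<omega> \<le> t}) / real n" for n t
        unfolding emp_cdf_def by (intro divide_right_mono) (auto intro!: card_mono)
      show "real (card {i\<in>{..<n}. X i \<omega> \<le> s}) / real n \<le> emp_cdf X n \<omega> t" if "s < t" for n s t
        unfolding emp_cdf_def using that by (intro divide_right_mono) (auto intro!: card_mono)
      show "0 \<le> G t" for t using mix_nonneg[OF F(1-3)] F(4) by simp
      show "1 - G t = exp (- t) * rF F t" if "0 \<le> t" for t using mix_r[OF F(1-3) that] F(4) by simp
      show "rF F s < rF F t" if "0 \<le> s" "s < t" for s t by (rule rF_mono[OF F(1-3) np that])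
      show "\<exists>t0\<ge>0. 1 / q \<le> rF F t0" by (rule rF_big[OF F(1-3) np assms(2)])
      show "(\<lambda>n. real (card {i\<in>{..<n}. X i \<omega> \<le> real j / real (Suc m)}) / real n) \<longlonglongrightarrow> G (real j / real (Suc m))" for j m
        using H by blast
    qed
  qed
qed


end
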